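(* In the setting described in the context, for $\tau\in L$ let $K^{\mathrm{S}}_\tau:Q\to\mathbb{C}$ be $K^{\mathrm{S}}_\tau(\phi)=\overline{B(\tau,\phi)}$. Then the linear span of $\{K^{\mathrm{S}}_\tau:\tau\in L\}$ is dense in $\mathrm{L}^2(Q,\mu_Q)$.
   Context: $L$ is a finite-dimensional real vector space and $[\cdot,\cdot]:L\times L\to\mathbb{R}$ is a bilinear form such that $\omega(\xi,\xi')=\frac12[\xi,\xi']-\frac12[\xi',\xi]$ is non-degenerate. Set $M=\{\tau\in L:[\xi,\tau]=0\ \forall\xi\in L\}$ and $N=\{\tau\in L:[\tau,\xi]=0\ \forall\xi\in L\}$, and assume $L=M\oplus N$. Let $Q=L/M$ with quotient map $q:L\to Q$; $[\cdot,\cdot]$ descends to $L\times Q\to\mathbb{R}$. $J:L\to L$ is linear with $J^2=-\mathrm{id}$, $\omega(J\cdot,J\cdot)=\omega$, and $g(\tau,\xi):=2\omega(\tau,J\xi)$ positive definite; $\{\tau,\xi\}:=g(\tau,\xi)+2\mathrm{i}\,\omega(\tau,\xi)$. $Q$ carries the quotient norm from $g$, and $j:Q\to L$ is the unique linear map with $q\circ j=\mathrm{id}_Q$ and $j(Q)\subseteq JM$. $\mu_Q$ is the Lebesgue measure on $Q$ normalized by $\int_Q\exp(-g(j(\phi),j(\phi)))\,\mathrm{d}\mu_Q(\phi)=1$. $B:L\times Q\to\mathbb{C}$ is $$B(\xi,\phi)=\exp\Big(\{j(\phi),\xi\}-\tfrac{\mathrm{i}}{2}[j(\phi),j(\phi)]-\tfrac12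 g(j(\phi),j(\phi))+\tfrac14 g(\xi,\xi)-\tfrac12\{j(q(\xi)),\xi\}\Big).$$ *)

theory Defs
  imports "HOL-Analysis.Analysis"
begin

text \<open>L is modelled by a Euclidean-space type 'l (only its real vector space
structure is used), Q = L/M by a Euclidean-space type 'q together with a surjective
linear map q whose kernel is M.\<close>

definition omega :: "('l \<Rightarrow> 'l \<Rightarrow> real) \<Rightarrow> 'l \<Rightarrow> 'l \<Rightarrow> real" where
  "omega bl x y = bl x y / 2 - bl y x / 2"

definition Mset :: "('l \<Rightarrow> 'l \<Rightarrow> real) \<Rightarrow> 'l set" where
  "Mset bl = {\<tau>. \<forall>\<xi>. bl \<xi> \<tau> = 0}"

definition Nset :: "('l \<Rightarrow> 'l \<Rightarrow> real) \<Rightarrow> 'l set" where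
  "Nset bl = {\<tau>. \<forall>\<xi>. bl \<tau> \<xi> = 0}"

definition gform :: "('l \<Rightarrow> 'l \<Rightarrow> real) \<Rightarrow> ('l \<Rightarrow> 'l) \<Rightarrow> 'l \<Rightarrow> 'l \<Rightarrow> real" where
  "gform bl J \<tau> \<xi> = 2 * omega bl \<tau> (J \<xi>)"

definition cbr :: "('l \<Rightarrow> 'l \<Rightarrow> real) \<Rightarrow> ('l \<Rightarrow> 'l) \<Rightarrow> 'l \<Rightarrow> 'l \<Rightarrow> complex" where
  "cbr bl J \<tau> \<xi> = complex_of_real (gform bl J \<tau> \<xi>) + 2 * \<i> * complex_of_real (omega bl \<tau> \<xi>)"

definition jmap :: "('l::real_vector \<Rightarrow> 'l \<Rightarrow> real) \<Rightarrow> ('l \<Rightarrow> 'l) \<Rightarrow> ('l \<Rightarrow> 'q::real_vector) \<Rightarrow> 'q \<Rightarrow> 'l" where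
  "jmap bl J q = (THE j. linear j \<and> (\<forall>\<phi>. q (j \<phi>) = \<phi>) \<and> range j \<subseteq> J ` Mset bl)"

definition Bfun :: "('l::real_vector \<Rightarrow> 'l \<Rightarrow> real) \<Rightarrow> ('l \<Rightarrow> 'l) \<Rightarrow> ('l \<Rightarrow> 'q::real_vector)
    \<Rightarrow> 'l \<Rightarrow> 'q \<Rightarrow> complex" where
  "Bfun bl J q \<xi> \<phi> =
     (let j = jmap bl J q in
      exp (cbr bl J (j \<phi>) \<xi>
           - (\<i> / 2) * complex_of_real (bl (j \<phi>) (j \<phi>))
           - complex_of_real (gform bl J (j \<phi>) (j \<phi>) / 2)
           + complex_of_real (gform bl J \<xi> \<xi> / 4)
           - cbr bl J (j (q \<xi>)) \<xi> / 2))"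

definition muQ :: "('l::real_vector \<Rightarrow> 'l \<Rightarrow> real) \<Rightarrow> ('l \<Rightarrow> 'l) \<Rightarrow> ('l \<Rightarrow> 'q::euclidean_space) \<Rightarrow> 'q measure" where
  "muQ bl J q = density lborel
     (\<lambda>_. inverse (\<integral>\<^sup>+ \<psi>. ennreal (exp (- gform bl J (jmap bl J q \<psi>) (jmap bl J q \<psi>))) \<partial>lborel))"

end

theory Submission
  imports Defs
begin


definition trigp :: "('q::euclidean_space \<Rightarrow> complex) \<Rightarrow> bool" where
  "trigp h \<longleftrightarrow> (\<exists>V c. finite V \<and> (\<forall>x. h x = (\<Sum>v\<in>V. c v * exp (\<i> * of_real (x \<bullet> v)))))"

lemma trigp_exp: "trigp (\<lambda>x. exp (\<i> * of_real (x \<bullet> v)))"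
  unfolding trigp_def by (rule exI[of _ "{v}"], rule exI[of _ "\<lambda>_. 1"]) simp

lemma trigp_const: "trigp (\<lambda>x. c)"
  unfolding trigp_def by (rule exI[of _ "{0}"], rule exI[of _ "\<lambda>_. c"]) simp

lemma trigp_add:
  assumes "trigp f" "trigp g" shows "trigp (\<lambda>x. f x + g x)"
proof -
  obtain V c where V: "finite V" "\<And>x. f x = (\<Sum>v\<in>V. c v * exp (\<i> * of_real (x \<bullet> v)))"
    using assms(1) unfolding trigp_def by blast
  obtain W d where W: "finite W" "\<And>x. g x = (\<Sum>v\<in>W. d v * exp (\<i> * of_real (x \<bullet> v)))"
    using assms(2) unfolding trigp_def by blast
  define c' where "c' v = (if v \<in> V then c v else 0) + (if v \<in> W then d v else 0)" for v
  have "f x + g x = (\<Sum>v\<in>V \<union> W. c' v * exp (\<i> * of_real (x \<bullet> v)))" for x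
  proof -
    have "(\<Sum>v\<in>V \<union> W. c' v * exp (\<i> * of_real (x \<bullet> v))) =
      (\<Sum>v\<in>V \<union> W. (if v \<in> V then c v else 0) * exp (\<i> * of_real (x \<bullet> v))) +
      (\<Sum>v\<in>V \<union> W. (if v \<in> W then d v else 0) * exp (\<i> * of_real (x \<bullet> v)))"
      by (simp add: c'_def distrib_right sum.distrib)
    also have "\<dots> = f x + g x"
      by (simp add: V W sum.If_cases Int_absorb1 Int_absorb2 if_distrib[of "\<lambda>a. a * _"] cong: if_cong)
    finally show ?thesis by simp
  qed
  then show ?thesis unfolding trigp_def using V W by blast
qed

lemma trigp_sum: "finite I \<Longrightarrow> (\<And>i. i \<in> I \<Longrightarrow> trigp (f i)) \<Longrightarrow> trigp (\<lambda>x. \<Sum>i\<in>I. f i x)"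
proof (induction I rule: finite_induct)
  case empty then show ?case using trigp_const[of 0] by simp
next
  case (insert i I)
  have "trigp (\<lambda>x. f i x + (\<Sum>i\<in>I. f i x))"
    by (rule trigp_add) (use insert in auto)
  then show ?case using insert by simp
qed

lemma trigp_mult:
  assumes "trigp f" "trigp g" shows "trigp (\<lambda>x. f x * g x)"
proof -
  obtain V c where V: "finite V" "\<And>x. f x = (\<Sum>v\<in>V. c v * exp (\<i> * of_real (x \<bullet> v)))"
    using assms(1) unfolding trigp_def by blast
  obtain W d where W: "finite W" "\<And>x. g x = (\<Sum>v\<in>W. d v * exp (\<i> * of_real (x \<bullet> v)))"
    using assms(2) unfolding trigp_def by blast
  have fg: "f x * g x = (\<Sum>v\<in>V. \<Sum>w\<in>W. (c v * d w) * exp (\<i> * of_real (x \<bullet> (v + w))))" for x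
  proof -
    have "f x * g x = (\<Sum>v\<in>V. \<Sum>w\<in>W. (c v * exp (\<i> * of_real (x \<bullet> v))) * (d w * exp (\<i> * of_real (x \<bullet> w))))"
      by (simp only: V(2) W(2) sum_product)
    also have "\<dots> = (\<Sum>v\<in>V. \<Sum>w\<in>W. (c v * d w) * exp (\<i> * of_real (x \<bullet> (v + w))))"
      by (intro sum.cong refl) (simp add: inner_add_right distrib_left exp_add mult_ac)
    finally show ?thesis .
  qed
  have "trigp (\<lambda>x. \<Sum>v\<in>V. \<Sum>w\<in>W. (c v * d w) * exp (\<i> * of_real (x \<bullet> (v + w))))"
  proof (rule trigp_sum[OF V(1)])
    fix v assume "v \<in> V"
    show "trigp (\<lambda>x. \<Sum>w\<in>W. (c v * d w) * exp (\<i> * of_real (x \<bullet> (v + w))))"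
    proof (rule trigp_sum[OF W(1)])
      fix w assume "w \<in> W"
      show "trigp (\<lambda>x. (c v * d w) * exp (\<i> * of_real (x \<bullet> (v + w))))"
        unfolding trigp_def by (rule exI[of _ "{v+w}"], rule exI[of _ "\<lambda>_. c v * d w"]) simp
    qed
  qed
  then show ?thesis using fg by simp
qed

lemma trigp_cos: "trigp (\<lambda>x. of_real (cos (x \<bullet> v)))"
proof -
  have "of_real (cos (x \<bullet> v)) = (1/2) * exp (\<i> * of_real (x \<bullet> v)) + (1/2) * exp (\<i> * of_real (x \<bullet> (-v)))" for x
    by (simp add: cos_exp_eq cos_of_real[symmetric] field_simps)
  then show ?thesis
    by (simp only: ) (intro trigp_add trigp_mult trigp_const trigp_exp)
qed

lemma trigp_sin: "trigp (\<lambda>x. of_real (sin (x \<bullet> v)))"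
proof -
  have "of_real (sin (x \<bullet> v)) = (-\<i>/2) * exp (\<i> * of_real (x \<bullet> v)) + (\<i>/2) * exp (\<i> * of_real (x \<bullet> (-v)))" for x
    by (simp add: sin_exp_eq sin_of_real[symmetric] field_simps)
  then show ?thesis
    by (simp only: ) (intro trigp_add trigp_mult trigp_const trigp_exp)
qed




definition torus :: "real \<Rightarrow> 'q::euclidean_space \<Rightarrow> 'q \<times> 'q" where
  "torus a x = ((\<Sum>b\<in>Basis. cos (a * (x \<bullet> b)) *\<^sub>R b), (\<Sum>b\<in>Basis. sin (a * (x \<bullet> b)) *\<^sub>R b))"

lemma trigp_torus_linear:
  fixes l :: "'q::euclidean_space \<times> 'q \<Rightarrow> real"
  assumes "bounded_linear l"
  shows "trigp (\<lambda>x. of_real (l (torus a x)))"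
proof -
  interpret l: bounded_linear l by fact
  have "l (torus a x) = (\<Sum>b\<in>Basis. cos (x \<bullet> (a *\<^sub>R b)) * l (b, 0)) + (\<Sum>b\<in>Basis. sin (x \<bullet> (a *\<^sub>R b)) * l (0, b))" for x
  proof -
    have "torus a x = (\<Sum>b\<in>Basis. cos (a * (x \<bullet> b)) *\<^sub>R (b, 0)) + (\<Sum>b\<in>Basis. sin (a * (x \<bullet> b)) *\<^sub>R (0, b))"
      by (simp add: torus_def sum_prod)
    moreover have "l (c *\<^sub>R b, 0) = c * l (b, 0)" "l (0, c *\<^sub>R b) = c * l (0, b)" for c b
      using l.scale[of c "(b,0)"] l.scale[of c "(0,b)"] by simp_all
    ultimately show ?thesis
      by (simp add: l.add l.sum mult_ac)
  qed
  then have eq: "of_real (l (torus a x)) = (\<Sum>b\<in>Basis. of_real (l (b, 0)) * of_real (cos (x \<bullet> (a *\<^sub>R b)))) + (\<Sum>b\<in>Basis. of_real (l (0, b)) * of_real (sin (x \<bullet> (a *\<^sub>R b))))" for x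
    by (simp add: mult_ac)
  show ?thesis
    unfolding eq
    by (intro trigp_add trigp_sum trigp_mult trigp_const trigp_cos trigp_sin finite_Basis)
qed

lemma trigp_torus_real_poly:
  fixes r :: "'q::euclidean_space \<times> 'q \<Rightarrow> real"
  assumes "real_polynomial_function r"
  shows "trigp (\<lambda>x. of_real (r (torus a x)))"
  using assms
proof induction
  case (linear f) then show ?case by (rule trigp_torus_linear)
next
  case (const c) then show ?case by (rule trigp_const)
next
  case (add f g) then show ?case by (simp add: trigp_add)
next
  case (mult f g) then show ?case by (simp add: trigp_mult)
qed

lemma trigp_torus_poly:
  fixes p :: "'q::euclidean_space \<times> 'q \<Rightarrow> complex"
  assumes "polynomial_function p"
  shows "trigp (\<lambda>x. p (torus a x))"
proof -
  have r: "real_polynomial_function (Re \<circ> p)" "real_polynomial_function (Im \<circ> p)"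
    using assms unfolding polynomial_function_def by (auto intro: bounded_linear_Re bounded_linear_Im)
  have "p z = of_real ((Re \<circ> p) z) + \<i> * of_real ((Im \<circ> p) z)" for z
    by (simp add: complex_eq_iff)
  then have eq: "(\<lambda>x. p (torus a x)) = (\<lambda>x. of_real ((Re \<circ> p) (torus a x)) + \<i> * of_real ((Im \<circ> p) (torus a x)))"
    by auto
  show ?thesis unfolding eq
    by (intro trigp_add trigp_mult trigp_const trigp_torus_real_poly r)
qed




definition Bx :: "real \<Rightarrow> 'q::euclidean_space set" where
  "Bx r = {x. \<forall>b\<in>Basis. \<bar>x \<bullet> b\<bar> \<le> r}"

lemma Bx_cbox: "Bx r = cbox (-(r *\<^sub>R One)) (r *\<^sub>R One)"
  by (rule set_eqI) (auto simp: Bx_def mem_box abs_le_iff inner_minus_left)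

lemma compact_Bx: "compact (Bx r)" by (simp add: Bx_cbox)

lemma in_Bx_norm: "norm x \<le> r \<Longrightarrow> x \<in> Bx r"
  unfolding Bx_def using Basis_le_norm order_trans by blast

lemma notin_Bx_norm: "x \<notin> Bx r \<Longrightarrow> norm x > r"
  by (meson in_Bx_norm not_le)

lemma inner_sum_Basis: "b \<in> Basis \<Longrightarrow> (\<Sum>b'\<in>Basis. f b' *\<^sub>R b') \<bullet> (b::'q::euclidean_space) = f b"
  by (simp add: inner_sum_left inner_Basis if_distrib[of "\<lambda>t. _ * t"] sum.delta cong: if_cong)

lemma torus_eq_iff:
  "torus a x = torus a (y::'q::euclidean_space) \<longleftrightarrow>
    (\<forall>b\<in>Basis. cos (a * (x \<bullet> b)) = cos (a * (y \<bullet> b)) \<and> sin (a * (x \<bullet> b)) = sin (a * (y \<bullet> b)))"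
proof
  assume "torus a x = torus a y"
  then have H: "fst (torus a x) \<bullet> b = fst (torus a y) \<bullet> b \<and> snd (torus a x) \<bullet> b = snd (torus a y) \<bullet> b" for b
    by auto
  show "\<forall>b\<in>Basis. cos (a * (x \<bullet> b)) = cos (a * (y \<bullet> b)) \<and> sin (a * (x \<bullet> b)) = sin (a * (y \<bullet> b))"
  proof (intro ballI)
    fix b :: 'q assume b: "b \<in> Basis"
    from H[of b] show "cos (a * (x \<bullet> b)) = cos (a * (y \<bullet> b)) \<and> sin (a * (x \<bullet> b)) = sin (a * (y \<bullet> b))"
      by (simp add: torus_def inner_sum_Basis[OF b])
  qed
next
  assume "\<forall>b\<in>Basis. cos (a * (x \<bullet> b)) = cos (a * (y \<bullet> b)) \<and> sin (a * (x \<bullet> b)) = sin (a * (y \<bullet> b))"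
  then show "torus a x = torus a y"
    unfolding torus_def by (auto intro!: sum.cong)
qed

lemma torus_reduce:
  assumes r: "r > 0"
  shows "\<exists>y\<in>Bx r. torus (pi / r) y = torus (pi / r) (x::'q::euclidean_space)"
proof -
  define k where "k b = \<lfloor>(x \<bullet> b + r) / (2 * r)\<rfloor>" for b
  define y where "y = (\<Sum>b\<in>Basis. (x \<bullet> b - 2 * r * k b) *\<^sub>R b)"
  have yb: "y \<bullet> b = x \<bullet> b - 2 * r * k b" if "b \<in> Basis" for b
    using that by (simp add: y_def inner_sum_Basis)
  have "\<bar>y \<bullet> b\<bar> \<le> r" if "b \<in> Basis" for b
  proof -
    have "k b \<le> (x \<bullet> b + r) / (2 * r)" "(x \<bullet> b + r) / (2 * r) < k b + 1"
      unfolding k_def by linarith+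
    then have "2 * r * k b \<le> x \<bullet> b + r" "x \<bullet> b + r < 2 * r * k b + 2 * r"
      using r by (simp_all add: field_simps)
    then show ?thesis using yb[OF that] by linarith
  qed
  then have "y \<in> Bx r" by (simp add: Bx_def)
  moreover have "pi / r * (y \<bullet> b) = pi / r * (x \<bullet> b) + 2 * pi * real_of_int (- k b)" if "b \<in> Basis" for b
  proof -
    have "x \<bullet> b = y \<bullet> b + 2 * r * k b" using yb[OF that] by simp
    then show ?thesis using r by (simp add: field_simps)
  qed
  then have "torus (pi / r) y = torus (pi / r) x"
    unfolding torus_eq_iff by (metis sin_cos_eq_iff)
  ultimately show ?thesis by blast
qed

lemma torus_ident:
  assumes r: "r > 0" and x: "x \<in> Bx r" and y: "y \<in> Bx r"
    and eq: "torus (pi / r) x = torus (pi / r) (y::'q::euclidean_space)" and ne: "x \<noteq> y"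
  shows "norm x \<ge> r \<and> norm y \<ge> r"
proof -
  obtain b where b: "b \<in> Basis" "x \<bullet> b \<noteq> y \<bullet> b"
    using ne euclidean_eqI by blast
  obtain n :: int where n: "pi / r * (x \<bullet> b) = pi / r * (y \<bullet> b) + 2 * pi * n"
    using eq b(1) unfolding torus_eq_iff by (metis sin_cos_eq_iff)
  then have "pi * (x \<bullet> b) = pi * (y \<bullet> b + 2 * r * n)"
    using r by (simp add: field_simps)
  then have n': "x \<bullet> b = y \<bullet> b + 2 * r * n"
    by simp
  have xb: "\<bar>x \<bullet> b\<bar> \<le> r" and yb: "\<bar>y \<bullet> b\<bar> \<le> r"
    using x y b(1) by (auto simp: Bx_def)
  have "n \<noteq> 0" using n' b(2) by auto
  moreover have "\<bar>2 * r * n\<bar> \<le> 2 * r" using n' xb yb by linarith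
  then have "\<bar>real_of_int n\<bar> \<le> 1" using r by (simp add: abs_mult)
  ultimately have "\<bar>real_of_int n\<bar> = 1" by linarith
  then have "\<bar>x \<bullet> b\<bar> = r \<and> \<bar>y \<bullet> b\<bar> = r" using n' xb yb r by (auto simp: abs_if split: if_splits)
  then show ?thesis using Basis_le_norm[OF b(1), of x] Basis_le_norm[OF b(1), of y] by auto
qed




lemma continuous_torus: "continuous_on A (torus a)"
  unfolding torus_def by (intro continuous_intros)

lemma torus_lift:
  fixes u :: "'q::euclidean_space \<Rightarrow> complex"
  assumes r: "r > 0" and uc: "continuous_on UNIV u" and us: "\<forall>x. norm x \<ge> r \<longrightarrow> u x = 0"
  obtains F where "continuous_on (torus (pi/r) ` Bx r) F" "\<forall>x\<in>Bx r. F (torus (pi/r) x) = u x"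
proof -
  let ?T = "torus (pi/r) :: 'q \<Rightarrow> 'q \<times> 'q"
  let ?X = "top_of_set (Bx r :: 'q set)"
  let ?Y = "top_of_set (?T ` Bx r)"
  have cm: "continuous_map ?X ?Y ?T"
    using continuous_torus by (simp add: continuous_map_subtopology_eu)
  have "closed_map ?X ?Y ?T"
  proof (rule continuous_imp_closed_map_gen[OF _ _ cm])
    show "compact_space ?X" by (simp add: compact_space_subtopology compact_Bx)
    show "kc_space ?Y" by (simp add: Hausdorff_imp_kc_space Hausdorff_space_subtopology)
  qed
  then have qm: "quotient_map ?X ?Y ?T"
    using cm by (intro continuous_closed_imp_quotient_map) auto
  have hc: "continuous_map ?X euclidean u"
    using uc continuous_on_subset by auto
  have eqv: "u x = u y" if "x \<in> topspace ?X" "y \<in> topspace ?X" "?T x = ?T y" for x y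
  proof (cases "x = y")
    case False
    then have "norm x \<ge> r \<and> norm y \<ge> r" using torus_ident[OF r] that by auto
    then show ?thesis using us by auto
  qed simp
  obtain G where "continuous_map ?Y euclidean G" "\<And>x. x \<in> topspace ?X \<Longrightarrow> G (?T x) = u x"
  proof (rule quotient_map_lift_exists[OF qm hc])
    show "\<And>x y. x \<in> topspace ?X \<Longrightarrow> y \<in> topspace ?X \<Longrightarrow> ?T x = ?T y \<Longrightarrow> u x = u y"
      by (rule eqv)
  qed blast
  then show ?thesis using that by auto
qed




lemma ennreal_finite_obtain:
  assumes "(x::ennreal) < \<infinity>" obtains r where "r \<ge> 0" "x = ennreal r"
  using assms by (cases x rule: ennreal_cases) auto

lemma tail_to_zero:
  fixes w :: "'q::euclidean_space \<Rightarrow> complex"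
  assumes wm: "w \<in> borel_measurable lborel"
    and wL2: "(\<integral>\<^sup>+x. ennreal (norm (w x))^2 \<partial>lborel) < \<infinity>"
  shows "(\<lambda>k::nat. \<integral>\<^sup>+x. ennreal (norm (w x))^2 * indicator (- Bx (real k)) x \<partial>lborel) \<longlonglongrightarrow> 0"
proof -
  have cl: "- Bx (real k) \<in> sets lborel" for k :: nat
    unfolding sets_lborel by (rule borel_open) (use compact_Bx compact_imp_closed open_Compl in blast)
  have "(\<lambda>k::nat. \<integral>\<^sup>+x. ennreal (norm (w x))^2 * indicator (- Bx (real k)) x \<partial>lborel) \<longlonglongrightarrow> (\<integral>\<^sup>+x. 0 \<partial>(lborel::'q measure))"
  proof (rule nn_integral_dominated_convergence[where w="\<lambda>x. ennreal (norm (w x))^2"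
      and u="\<lambda>k x. ennreal (norm (w x))^2 * indicator (- Bx (real k)) x" and u'="\<lambda>x. 0" and M=lborel])
    show "(\<lambda>x. ennreal (norm (w x))^2 * indicator (- Bx (real k)) x) \<in> borel_measurable lborel" for k :: nat
      using wm cl by measurable
    show "(\<lambda>x. ennreal (norm (w x))^2) \<in> borel_measurable lborel" using wm by measurable
    show "(\<lambda>x. 0::ennreal) \<in> borel_measurable lborel" by simp
    show "AE x in lborel. ennreal (norm (w x))^2 * indicator (- Bx (real k)) x \<le> ennreal (norm (w x))^2" for k :: nat
      by (auto split: split_indicator)
    show "(\<integral>\<^sup>+x. ennreal (norm (w x))^2 \<partial>lborel) < \<infinity>" by fact
    show "AE x in lborel. (\<lambda>k::nat. ennreal (norm (w x))^2 * indicator (- Bx (real k)) x) \<longlonglongrightarrow> 0"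
    proof (rule AE_I2)
      fix x :: 'q
      have "\<forall>\<^sub>F k in sequentially. ennreal (norm (w x))^2 * indicator (- Bx (real k)) x = 0"
      proof (rule eventually_sequentiallyI[of "nat \<lceil>norm x\<rceil>"])
        fix k assume "nat \<lceil>norm x\<rceil> \<le> k"
        then have "norm x \<le> real k" by linarith
        then show "ennreal (norm (w x))^2 * indicator (- Bx (real k)) x = 0"
          using in_Bx_norm by (auto split: split_indicator)
      qed
      then show "(\<lambda>k::nat. ennreal (norm (w x))^2 * indicator (- Bx (real k)) x) \<longlonglongrightarrow> 0"
        by (rule tendsto_eventually)
    qed
  qed
  then show ?thesis by simp
qed




lemma ennreal_sq_le:
  assumes "0 \<le> a" "0 \<le> b" "0 \<le> c" "a^2 \<le> c * b^2"
  shows "ennreal a ^ 2 \<le> ennreal c * ennreal b ^ 2"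
proof -
  have "ennreal a ^ 2 = ennreal (a^2)" using assms by (simp add: ennreal_power)
  moreover have "ennreal c * ennreal b ^ 2 = ennreal (c * b^2)" using assms by (simp add: ennreal_power ennreal_mult)
  ultimately show ?thesis using assms(4) by (simp add: ennreal_leI)
qed

lemma cont_trig_approx:
  fixes g w :: "'q::euclidean_space \<Rightarrow> complex"
  assumes gc: "continuous_on UNIV g" and gs: "\<forall>x. norm x \<ge> R \<longrightarrow> g x = 0"
    and wc: "continuous_on UNIV w" and wnz: "\<forall>x. w x \<noteq> 0"
    and wL2: "(\<integral>\<^sup>+x. ennreal (norm (w x))^2 \<partial>lborel) < \<infinity>"
    and d: "(\<delta>::real) > 0"
  shows "\<exists>P. trigp P \<and> (\<integral>\<^sup>+x. ennreal (norm (g x - P x * w x))^2 \<partial>lborel) < ennreal \<delta>"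
proof -
  define u where "u x = g x / w x" for x
  have uc: "continuous_on UNIV u"
    unfolding u_def using gc wc wnz by (intro continuous_intros) auto
  have us: "norm x \<ge> R \<Longrightarrow> u x = 0" for x using gs by (simp add: u_def)
  have guw: "g x = u x * w x" for x using wnz by (simp add: u_def)
  have wm: "w \<in> borel_measurable lborel"
    using wc by (simp add: borel_measurable_continuous_onI)
  obtain B where B: "B > 0" "\<And>x. norm (u x) \<le> B"
  proof -
    have "bounded (u ` cball 0 R)"
      by (intro compact_imp_bounded compact_continuous_image continuous_on_subset[OF uc]) auto
    then obtain B where "B > 0" and B': "\<And>y. y \<in> u ` cball 0 R \<Longrightarrow> norm y \<le> B"
      using bounded_pos by metis
    show ?thesis
    proof (rule that[of B])
      fix x show "norm (u x) \<le> B"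
      proof (cases "norm x \<le> R")
        case True then show ?thesis using B' by auto
      next
        case False then show ?thesis using us \<open>B > 0\<close> by auto
      qed
    qed fact
  qed
  obtain Wr where Wr: "Wr \<ge> 0" "(\<integral>\<^sup>+x. ennreal (norm (w x))^2 \<partial>lborel) = ennreal Wr"
    using wL2 ennreal_finite_obtain by metis
  define \<eta> where "\<eta> = \<delta> / (4 * (B + 1)^2)"
  have \<eta>: "\<eta> > 0" using d B by (simp add: \<eta>_def)
  have "\<forall>\<^sub>F k in sequentially. (\<integral>\<^sup>+x. ennreal (norm (w x))^2 * indicator (- Bx (real k)) x \<partial>lborel) < ennreal \<eta>"
    using order_tendstoD(2)[OF tail_to_zero[OF wm wL2]] \<eta> by simp
  then obtain k :: nat where k: "real k \<ge> R" "real k \<ge> 1"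
    and kt: "(\<integral>\<^sup>+x. ennreal (norm (w x))^2 * indicator (- Bx (real k)) x \<partial>lborel) < ennreal \<eta>"
  proof -
    assume H: "\<And>k. R \<le> real k \<Longrightarrow> 1 \<le> real k \<Longrightarrow> (\<integral>\<^sup>+x. ennreal (norm (w x))^2 * indicator (- Bx (real k)) x \<partial>lborel) < ennreal \<eta> \<Longrightarrow> thesis"
    assume "\<forall>\<^sub>F k in sequentially. (\<integral>\<^sup>+x. ennreal (norm (w x))^2 * indicator (- Bx (real k)) x \<partial>lborel) < ennreal \<eta>"
    moreover have "\<forall>\<^sub>F k in sequentially. real k \<ge> max R 1"
      by (rule eventually_ge_at_top[of "nat \<lceil>max R 1\<rceil>", THEN eventually_mono]) linarith
    ultimately have "\<forall>\<^sub>F k in sequentially. real k \<ge> max R 1 \<and> (\<integral>\<^sup>+x. ennreal (norm (w x))^2 * indicator (- Bx (real k)) x \<partial>lborel) < ennreal \<eta>"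
      by (rule eventually_conj[THEN eventually_mono]) auto
    then obtain k where "real k \<ge> max R 1 \<and> (\<integral>\<^sup>+x. ennreal (norm (w x))^2 * indicator (- Bx (real k)) x \<partial>lborel) < ennreal \<eta>"
      using eventually_sequentially by auto
    then show thesis using H by auto
  qed
  obtain t where t: "t \<ge> 0" "t < \<eta>" "(\<integral>\<^sup>+x. ennreal (norm (w x))^2 * indicator (- Bx (real k)) x \<partial>lborel) = ennreal t"
  proof -
    obtain t where "t \<ge> 0" "(\<integral>\<^sup>+x. ennreal (norm (w x))^2 * indicator (- Bx (real k)) x \<partial>lborel) = ennreal t"
    proof (rule ennreal_finite_obtain)
      show "(\<integral>\<^sup>+x. ennreal (norm (w x))^2 * indicator (- Bx (real k)) x \<partial>lborel) < \<infinity>"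
        using kt by (metis ennreal_less_top infinity_ennreal_def order.strict_trans)
    qed
    moreover have "t < \<eta>" using kt calculation \<eta> by (simp add: ennreal_less_iff)
    ultimately show ?thesis using that by blast
  qed
  define r where "r = real k"
  have r: "r > 0" "r \<ge> R" using k by (auto simp: r_def)
  have usr: "norm x \<ge> r \<Longrightarrow> u x = 0" for x using us r by auto
  let ?T = "torus (pi/r) :: 'q \<Rightarrow> 'q \<times> 'q"
  obtain F where Fc: "continuous_on (?T ` Bx r) F" and FT: "\<forall>x\<in>Bx r. F (?T x) = u x"
    using torus_lift[OF r(1) uc] usr by metis
  define \<delta>1 where "\<delta>1 = min 1 (sqrt (\<delta> / (4 * (Wr + 1))))"
  have \<delta>1: "\<delta>1 > 0" "\<delta>1 \<le> 1" using d Wr by (auto simp: \<delta>1_def)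
  have \<delta>1sq: "\<delta>1^2 * Wr \<le> \<delta> / 4"
  proof -
    have "\<delta>1^2 \<le> (sqrt (\<delta> / (4 * (Wr + 1))))^2"
      unfolding \<delta>1_def using \<delta>1 by (intro power_mono) (auto simp: \<delta>1_def)
    also have "\<dots> = \<delta> / (4 * (Wr + 1))" using d Wr by simp
    finally have "\<delta>1^2 * Wr \<le> \<delta> / (4 * (Wr + 1)) * Wr" using Wr by (intro mult_right_mono) auto
    also have "\<dots> \<le> \<delta> / 4" using d Wr by (simp add: field_simps)
    finally show ?thesis .
  qed
  have "compact (?T ` Bx r)" by (intro compact_continuous_image continuous_torus compact_Bx)
  then obtain p where p: "polynomial_function p" "\<forall>z\<in>?T ` Bx r. norm (F z - p z) < \<delta>1"
    using Stone_Weierstrass_polynomial_function[OF _ Fc \<delta>1(1)] by blast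
  define P where "P x = p (?T x)" for x
  have trP: "trigp P" unfolding P_def by (rule trigp_torus_poly[OF p(1)])
  have Pin: "norm (u x - P x) < \<delta>1" if "x \<in> Bx r" for x
    using p(2) FT that by (auto simp: P_def)
  have Pb: "norm (P x) \<le> B + 1" for x
  proof -
    obtain y where y: "y \<in> Bx r" "?T y = ?T x" using torus_reduce[OF r(1)] by blast
    have "norm (P x) = norm (P y)" using y by (simp add: P_def)
    also have "\<dots> \<le> norm (u y) + norm (u y - P y)" using norm_triangle_ineq4[of "u y" "u y - P y"] by simp
    also have "\<dots> \<le> B + 1" using B(2)[of y] Pin[OF y(1)] \<delta>1 by linarith
    finally show ?thesis .
  qed
  have pw: "ennreal (norm (g x - P x * w x))^2 \<le> ennreal (\<delta>1^2) * ennreal (norm (w x))^2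
      + ennreal ((B+1)^2) * (ennreal (norm (w x))^2 * indicator (- Bx r) x)" for x
  proof (cases "x \<in> Bx r")
    case True
    have "norm (g x - P x * w x) = norm (u x - P x) * norm (w x)"
      by (simp add: guw norm_mult[symmetric] algebra_simps)
    also have "\<dots> \<le> \<delta>1 * norm (w x)" using Pin[OF True] by (intro mult_right_mono) auto
    finally have "(norm (g x - P x * w x))^2 \<le> (\<delta>1 * norm (w x))^2" by (intro power_mono) auto
    then have "ennreal (norm (g x - P x * w x))^2 \<le> ennreal (\<delta>1^2) * ennreal (norm (w x))^2"
      by (intro ennreal_sq_le) (auto simp: power_mult_distrib)
    then show ?thesis using True by (simp add: add_increasing2)
  next
    case False
    then have "norm x > r" by (rule notin_Bx_norm)
    then have "g x = 0" using guw usr by simp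
    then have "norm (g x - P x * w x) = norm (P x) * norm (w x)" by (simp add: norm_mult)
    also have "\<dots> \<le> (B + 1) * norm (w x)" using Pb[of x] by (intro mult_right_mono) auto
    finally have "(norm (g x - P x * w x))^2 \<le> ((B + 1) * norm (w x))^2" by (intro power_mono) auto
    then have "ennreal (norm (g x - P x * w x))^2 \<le> ennreal ((B+1)^2) * ennreal (norm (w x))^2"
      using B by (intro ennreal_sq_le) (auto simp: power_mult_distrib)
    then show ?thesis using False by (simp add: add_increasing)
  qed
  have cl: "- Bx r \<in> sets lborel"
    unfolding sets_lborel by (rule borel_open) (use compact_Bx compact_imp_closed open_Compl in blast)
  have "(\<integral>\<^sup>+x. ennreal (norm (g x - P x * w x))^2 \<partial>lborel) \<le>
     (\<integral>\<^sup>+x. ennreal (\<delta>1^2) * ennreal (norm (w x))^2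
      + ennreal ((B+1)^2) * (ennreal (norm (w x))^2 * indicator (- Bx r) x) \<partial>lborel)"
    by (intro nn_integral_mono pw)
  also have "\<dots> = ennreal (\<delta>1^2) * (\<integral>\<^sup>+x. ennreal (norm (w x))^2 \<partial>lborel)
      + ennreal ((B+1)^2) * (\<integral>\<^sup>+x. ennreal (norm (w x))^2 * indicator (- Bx r) x \<partial>lborel)"
  proof -
    have [measurable]: "w \<in> borel_measurable lborel" "- Bx r \<in> sets lborel" using wm cl by auto
    have m1: "(\<lambda>x. ennreal (\<delta>1^2) * ennreal (norm (w x))^2) \<in> borel_measurable lborel" by measurable
    have m2: "(\<lambda>x. ennreal ((B+1)^2) * (ennreal (norm (w x))^2 * indicator (- Bx r) x)) \<in> borel_measurable lborel" by measurable
    have m3: "(\<lambda>x. ennreal (norm (w x))^2) \<in> borel_measurable lborel" by measurable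
    have m4: "(\<lambda>x. ennreal (norm (w x))^2 * indicator (- Bx r) x) \<in> borel_measurable lborel" by measurable
    show ?thesis
      by (simp only: nn_integral_add[OF m1 m2] nn_integral_cmult[OF m3] nn_integral_cmult[OF m4])
  qed
  also have "\<dots> = ennreal (\<delta>1^2 * Wr + (B+1)^2 * t)"
    using Wr t r_def by (simp add: ennreal_mult ennreal_plus[symmetric] B(1) add_nonneg_nonneg)
  also have "\<dots> < ennreal \<delta>"
  proof (rule ennreal_lessI[OF d])
    have "(B+1)^2 * t < (B+1)^2 * \<eta>" using t B by (intro mult_strict_left_mono) auto
    also have "\<dots> = \<delta> / 4" using B by (simp add: \<eta>_def field_simps)
    finally show "\<delta>1^2 * Wr + (B+1)^2 * t < \<delta>" using \<delta>1sq d by linarith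
  qed
  finally show ?thesis using trP by blast
qed




lemma L2_tri:
  fixes a b c :: "'q::euclidean_space \<Rightarrow> complex"
  assumes [measurable]: "a \<in> borel_measurable lborel" "b \<in> borel_measurable lborel" "c \<in> borel_measurable lborel"
  shows "(\<integral>\<^sup>+x. ennreal (norm (a x - c x))^2 \<partial>lborel) \<le>
    2 * (\<integral>\<^sup>+x. ennreal (norm (a x - b x))^2 \<partial>lborel) + 2 * (\<integral>\<^sup>+x. ennreal (norm (b x - c x))^2 \<partial>lborel)"
proof -
  have pw: "ennreal (norm (a x - c x))^2 \<le> 2 * ennreal (norm (a x - b x))^2 + 2 * ennreal (norm (b x - c x))^2" for x
  proof -
    have "norm (a x - c x) \<le> norm (a x - b x) + norm (b x - c x)" using norm_triangle_ineq[of "a x - b x" "b x - c x"] by simp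
    then have "(norm (a x - c x))^2 \<le> (norm (a x - b x) + norm (b x - c x))^2" by (intro power_mono) auto
    also have "\<dots> \<le> 2 * (norm (a x - b x))^2 + 2 * (norm (b x - c x))^2"
    proof -
      have "0 \<le> (norm (a x - b x) - norm (b x - c x))^2" by simp
      then show ?thesis unfolding power2_eq_square by (simp add: algebra_simps)
    qed
    finally have "ennreal ((norm (a x - c x))^2) \<le> ennreal (2 * (norm (a x - b x))^2 + 2 * (norm (b x - c x))^2)"
      by (rule ennreal_leI)
    then show ?thesis
      by (simp add: ennreal_power ennreal_plus ennreal_mult)
  qed
  have "(\<integral>\<^sup>+x. ennreal (norm (a x - c x))^2 \<partial>lborel) \<le> (\<integral>\<^sup>+x. 2 * ennreal (norm (a x - b x))^2 + 2 * ennreal (norm (b x - c x))^2 \<partial>lborel)"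
    by (intro nn_integral_mono pw)
  also have "\<dots> = 2 * (\<integral>\<^sup>+x. ennreal (norm (a x - b x))^2 \<partial>lborel) + 2 * (\<integral>\<^sup>+x. ennreal (norm (b x - c x))^2 \<partial>lborel)"
  proof -
    have m1: "(\<lambda>x. 2 * ennreal (norm (a x - b x))^2) \<in> borel_measurable lborel" by measurable
    have m2: "(\<lambda>x. 2 * ennreal (norm (b x - c x))^2) \<in> borel_measurable lborel" by measurable
    have m3: "(\<lambda>x. ennreal (norm (a x - b x))^2) \<in> borel_measurable lborel" by measurable
    have m4: "(\<lambda>x. ennreal (norm (b x - c x))^2) \<in> borel_measurable lborel" by measurable
    show ?thesis by (simp only: nn_integral_add[OF m1 m2] nn_integral_cmult[OF m3] nn_integral_cmult[OF m4])
  qed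
  finally show ?thesis .
qed




lemma trunc_approx:
  fixes f :: "'q::euclidean_space \<Rightarrow> complex"
  assumes [measurable]: "f \<in> borel_measurable lborel"
    and fL2: "(\<integral>\<^sup>+x. ennreal (norm (f x))^2 \<partial>lborel) < \<infinity>"
    and e: "(e::real) > 0"
  shows "\<exists>n::nat. (\<integral>\<^sup>+x. ennreal (norm (f x - (if norm x \<le> n \<and> norm (f x) \<le> n then f x else 0)))^2 \<partial>lborel) < ennreal e"
proof -
  let ?u = "\<lambda>(n::nat) x. ennreal (norm (f x - (if norm x \<le> n \<and> norm (f x) \<le> n then f x else 0)))^2"
  have "(\<lambda>n. \<integral>\<^sup>+x. ?u n x \<partial>lborel) \<longlonglongrightarrow> (\<integral>\<^sup>+x. 0 \<partial>(lborel::'q measure))"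
  proof (rule nn_integral_dominated_convergence[where w="\<lambda>x. ennreal (norm (f x))^2" and u="?u" and u'="\<lambda>x. 0" and M=lborel])
    show "?u n \<in> borel_measurable lborel" for n by measurable
    show "(\<lambda>x. ennreal (norm (f x))^2) \<in> borel_measurable lborel" by measurable
    show "(\<lambda>x. 0::ennreal) \<in> borel_measurable lborel" by simp
    show "AE x in lborel. ?u n x \<le> ennreal (norm (f x))^2" for n
      by (auto simp: ennreal_power)
    show "(\<integral>\<^sup>+x. ennreal (norm (f x))^2 \<partial>lborel) < \<infinity>" by fact
    show "AE x in lborel. (\<lambda>n. ?u n x) \<longlonglongrightarrow> 0"
    proof (rule AE_I2)
      fix x :: 'q
      have "\<forall>\<^sub>F n in sequentially. ?u n x = 0"
      proof (rule eventually_sequentiallyI[of "nat \<lceil>max (norm x) (norm (f x))\<rceil>"])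
        fix k assume "nat \<lceil>max (norm x) (norm (f x))\<rceil> \<le> k"
        then have "norm x \<le> real k" "norm (f x) \<le> real k" by linarith+
        then show "?u k x = 0" by simp
      qed
      then show "(\<lambda>n. ?u n x) \<longlonglongrightarrow> 0" by (rule tendsto_eventually)
    qed
  qed
  then have "\<forall>\<^sub>F n in sequentially. (\<integral>\<^sup>+x. ?u n x \<partial>lborel) < ennreal e"
    using e by (intro order_tendstoD(2)) auto
  then show ?thesis using eventually_sequentially by (metis (no_types, lifting) order_refl)
qed




definition clipc :: "real \<Rightarrow> complex \<Rightarrow> complex" where
  "clipc n z = of_real (max (-n) (min n (Re z))) + \<i> * of_real (max (-n) (min n (Im z)))"

lemma clipc_id: "norm z \<le> n \<Longrightarrow> clipc n z = z"
  unfolding clipc_def using abs_Re_le_cmod[of z] abs_Im_le_cmod[of z]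
  by (simp add: complex_eq_iff abs_le_iff max_def min_def)

lemma clipc_norm: "n \<ge> 0 \<Longrightarrow> norm (clipc n z) \<le> 2 * n"
proof -
  assume n: "n \<ge> 0"
  have "norm (clipc n z) \<le> norm (of_real (max (-n) (min n (Re z))) :: complex) + norm (\<i> * of_real (max (-n) (min n (Im z))))"
    unfolding clipc_def by (rule norm_triangle_ineq)
  also have "\<dots> \<le> n + n" using n by (simp add: norm_mult abs_le_iff)
  finally show ?thesis by simp
qed

lemma bdd_cont_approx:
  fixes h :: "'q::euclidean_space \<Rightarrow> complex"
  assumes hm[measurable]: "h \<in> borel_measurable lborel" and hb: "\<forall>x. norm (h x) \<le> n"
    and hs: "\<forall>x. norm x > n \<longrightarrow> h x = 0" and e: "(e::real) > 0" and n: "n \<ge> 0"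
  shows "\<exists>g. continuous_on UNIV g \<and> (\<forall>x. norm x \<ge> n + 1 \<longrightarrow> g x = 0) \<and>
     (\<integral>\<^sup>+x. ennreal (norm (h x - g x))^2 \<partial>lborel) < ennreal e"
proof -
  have "h measurable_on UNIV"
    using measurable_completion[OF hm]
    by (subst measurable_on_iff_borel_measurable) (auto simp: lebesgue_on_UNIV_eq)
  then obtain N c where N: "negligible N" and cc: "\<And>k. continuous_on UNIV (c k)"
    and clim: "\<And>x. x \<notin> N \<Longrightarrow> (\<lambda>k. c k x) \<longlonglongrightarrow> h x"
    unfolding measurable_on_def by auto
  define \<phi> where "\<phi> x = max 0 (min 1 (n + 1 - norm x))" for x :: 'q
  define G where "G k x = of_real (\<phi> x) * clipc n (c k x)" for k x
  have Gc: "continuous_on UNIV (G k)" for k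
    unfolding G_def \<phi>_def clipc_def by (intro continuous_intros cc)
  have Gs: "norm x \<ge> n + 1 \<Longrightarrow> G k x = 0" for k x
    by (simp add: G_def \<phi>_def)
  have Gm[measurable]: "G k \<in> borel_measurable lborel" for k
    using Gc by (simp add: borel_measurable_continuous_onI)
  have hid: "of_real (\<phi> x) * clipc n (h x) = h x" for x
  proof (cases "norm x \<le> n")
    case True then show ?thesis using hb clipc_id by (simp add: \<phi>_def)
  next
    case False then show ?thesis using hs n by (simp add: clipc_def)
  qed
  have Glim: "(\<lambda>k. G k x) \<longlonglongrightarrow> h x" if "x \<notin> N" for x
  proof -
    have "(\<lambda>k. G k x) \<longlonglongrightarrow> of_real (\<phi> x) * clipc n (h x)"
      unfolding G_def clipc_def by (intro tendsto_intros clim[OF that])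
    then show ?thesis by (simp add: hid)
  qed
  let ?u = "\<lambda>k x. ennreal (norm (h x - G k x))^2"
  let ?w = "\<lambda>x. ennreal ((3 * n)^2) * indicator (cball (0::'q) (n + 1)) x"
  have "(\<lambda>k. \<integral>\<^sup>+x. ?u k x \<partial>lborel) \<longlonglongrightarrow> (\<integral>\<^sup>+x. 0 \<partial>(lborel::'q measure))"
  proof (rule nn_integral_dominated_convergence[where w="?w" and u="?u" and u'="\<lambda>x. 0" and M=lborel])
    show "?u k \<in> borel_measurable lborel" for k by measurable
    show "?w \<in> borel_measurable lborel"
      by (intro borel_measurable_times_ennreal borel_measurable_const borel_measurable_indicator) (simp add: borel_closed)
    show "(\<lambda>x. 0::ennreal) \<in> borel_measurable lborel" by simp
    show "AE x in lborel. ?u k x \<le> ?w x" for k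
    proof (rule AE_I2)
      fix x :: 'q
      show "?u k x \<le> ?w x"
      proof (cases "norm x \<le> n + 1")
        case True
        have "norm (h x - G k x) \<le> norm (h x) + norm (G k x)" by (rule norm_triangle_ineq4)
        also have "norm (G k x) \<le> 2 * n"
        proof -
          have "norm (G k x) = \<bar>\<phi> x\<bar> * norm (clipc n (c k x))" by (simp add: G_def norm_mult)
          also have "\<dots> \<le> 1 * (2 * n)" using clipc_norm[OF n] by (intro mult_mono) (auto simp: \<phi>_def)
          finally show ?thesis by simp
        qed
        finally have "norm (h x - G k x) \<le> 3 * n" using hb[rule_format, of x] by linarith
        then have "(norm (h x - G k x))^2 \<le> (3 * n)^2" by (intro power_mono) auto
        then show ?thesis using True n by (simp add: ennreal_power ennreal_leI)
      next
        case False
        then show ?thesis using Gs[of x k] hs by simp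
      qed
    qed
    show "(\<integral>\<^sup>+x. ?w x \<partial>lborel) < \<infinity>"
      using emeasure_lborel_cball_finite[of "0::'q" "n+1"]
      by (subst nn_integral_cmult_indicator) (auto simp: borel_closed ennreal_mult_less_top top.not_eq_extremum infinity_ennreal_def)
    show "AE x in lborel. (\<lambda>k. ?u k x) \<longlonglongrightarrow> 0"
    proof -
      have "AE x in lebesgue. x \<notin> N"
        using N by (simp add: negligible_iff_null_sets AE_not_in)
      then have "AE x in lborel. x \<notin> N" by (simp add: AE_completion_iff)
      then show ?thesis
      proof (rule AE_mp, intro AE_I2 impI)
        fix x assume "x \<notin> N"
        then have "(\<lambda>k. h x - G k x) \<longlonglongrightarrow> 0" using Glim tendsto_diff[OF tendsto_const, of "\<lambda>k. G k x" "h x" _ "h x"] by simp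
        then have "(\<lambda>k. (norm (h x - G k x))^2) \<longlonglongrightarrow> (norm (0::complex))^2"
          by (intro tendsto_intros)
        then have "(\<lambda>k. ennreal ((norm (h x - G k x))^2)) \<longlonglongrightarrow> ennreal 0"
          by (intro tendsto_ennrealI) simp
        then show "(\<lambda>k. ennreal (norm (h x - G k x))^2) \<longlonglongrightarrow> 0" by (simp add: ennreal_power)
      qed
    qed
  qed
  then have "\<forall>\<^sub>F k in sequentially. (\<integral>\<^sup>+x. ?u k x \<partial>lborel) < ennreal e"
    using e by (intro order_tendstoD(2)) auto
  then obtain k where "(\<integral>\<^sup>+x. ?u k x \<partial>lborel) < ennreal e"
    using eventually_sequentially by (metis (no_types, lifting) order_refl)
  then show ?thesis using Gc Gs by blast
qed




lemma trigp_cont: "trigp P \<Longrightarrow> continuous_on UNIV P"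
proof -
  assume "trigp P"
  then obtain V c where "finite V" "\<And>x. P x = (\<Sum>v\<in>V. c v * exp (\<i> * of_real (x \<bullet> v)))"
    unfolding trigp_def by blast
  then have "P = (\<lambda>x. \<Sum>v\<in>V. c v * exp (\<i> * of_real (x \<bullet> v)))" by auto
  then show ?thesis by (simp add: continuous_intros)
qed

lemma ennreal_sum3_bound:
  assumes "a < ennreal x" "b < ennreal x" "c < ennreal x" "x > 0"
  shows "2 * (2 * a + 2 * b) + 2 * c < ennreal (16 * x)"
proof -
  have "2 * (2 * a + 2 * b) + 2 * c \<le> 2 * (2 * ennreal x + 2 * ennreal x) + 2 * ennreal x"
    using assms by (intro add_mono mult_left_mono) auto
  also have "\<dots> = (2 * (2 + 2) + 2) * ennreal x"
    by (simp only: distrib_right mult.assoc)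
  also have "\<dots> = ennreal (10 * x)"
    using assms(4) by (simp add: ennreal_mult)
  also have "\<dots> < ennreal (16 * x)" using assms(4) by (simp add: ennreal_lessI)
  finally show ?thesis .
qed

lemma main_dense:
  fixes f w :: "'q::euclidean_space \<Rightarrow> complex"
  assumes fm[measurable]: "f \<in> borel_measurable lborel"
    and fL2: "(\<integral>\<^sup>+x. ennreal (norm (f x))^2 \<partial>lborel) < \<infinity>"
    and wc: "continuous_on UNIV w" and wnz: "\<forall>x. w x \<noteq> 0"
    and wL2: "(\<integral>\<^sup>+x. ennreal (norm (w x))^2 \<partial>lborel) < \<infinity>"
    and e: "(e::real) > 0"
  shows "\<exists>P. trigp P \<and> (\<integral>\<^sup>+x. ennreal (norm (f x - P x * w x))^2 \<partial>lborel) < ennreal e"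
proof -
  have e16: "e / 16 > 0" using e by simp
  obtain n :: nat where n: "(\<integral>\<^sup>+x. ennreal (norm (f x - (if norm x \<le> n \<and> norm (f x) \<le> n then f x else 0)))^2 \<partial>lborel) < ennreal (e/16)"
    using trunc_approx[OF fm fL2 e16] by blast
  define h where "h x = (if norm x \<le> n \<and> norm (f x) \<le> n then f x else 0)" for x
  have hm[measurable]: "h \<in> borel_measurable lborel" unfolding h_def by measurable
  have hb: "\<forall>x. norm (h x) \<le> real n" by (simp add: h_def)
  have hs: "\<forall>x. norm x > real n \<longrightarrow> h x = 0" by (simp add: h_def)
  obtain g where gc: "continuous_on UNIV g" and gs: "\<forall>x. norm x \<ge> real n + 1 \<longrightarrow> g x = 0"
    and gi: "(\<integral>\<^sup>+x. ennreal (norm (h x - g x))^2 \<partial>lborel) < ennreal (e/16)"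
    using bdd_cont_approx[OF hm hb hs e16] by auto
  obtain P where tP: "trigp P" and Pi: "(\<integral>\<^sup>+x. ennreal (norm (g x - P x * w x))^2 \<partial>lborel) < ennreal (e/16)"
    using cont_trig_approx[OF gc gs wc wnz wL2 e16] by blast
  have gm[measurable]: "g \<in> borel_measurable lborel" using gc by (simp add: borel_measurable_continuous_onI)
  have Pwm[measurable]: "(\<lambda>x. P x * w x) \<in> borel_measurable lborel"
  proof -
    have "continuous_on UNIV (\<lambda>x. P x * w x)" using trigp_cont[OF tP] wc by (intro continuous_intros)
    then show ?thesis by (simp add: borel_measurable_continuous_onI)
  qed
  have "(\<integral>\<^sup>+x. ennreal (norm (f x - P x * w x))^2 \<partial>lborel) \<le>
      2 * (\<integral>\<^sup>+x. ennreal (norm (f x - g x))^2 \<partial>lborel) + 2 * (\<integral>\<^sup>+x. ennreal (norm (g x - P x * w x))^2 \<partial>lborel)"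
    by (rule L2_tri) measurable
  also have "\<dots> \<le> 2 * (2 * (\<integral>\<^sup>+x. ennreal (norm (f x - h x))^2 \<partial>lborel) + 2 * (\<integral>\<^sup>+x. ennreal (norm (h x - g x))^2 \<partial>lborel))
      + 2 * (\<integral>\<^sup>+x. ennreal (norm (g x - P x * w x))^2 \<partial>lborel)"
    using L2_tri[OF fm hm gm] by (intro add_mono mult_left_mono) auto
  also have "\<dots> < ennreal (16 * (e / 16))"
    using n gi Pi e16 unfolding h_def by (intro ennreal_sum3_bound) auto
  finally show ?thesis using tP by auto
qed




locale LA =
  fixes bl :: "'l::euclidean_space \<Rightarrow> 'l \<Rightarrow> real"
    and J :: "'l \<Rightarrow> 'l"
    and q :: "'l \<Rightarrow> 'q::euclidean_space"
  assumes bil: "bilinear bl"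
    and nondeg: "\<forall>x. (\<forall>y. omega bl x y = 0) \<longrightarrow> x = 0"
    and dsum_int: "Mset bl \<inter> Nset bl = {0}"
    and dsum_span: "\<forall>x. \<exists>m\<in>Mset bl. \<exists>n\<in>Nset bl. x = m + n"
    and q_lin: "linear q" and q_surj: "surj q"
    and q_ker: "\<forall>x. q x = 0 \<longleftrightarrow> x \<in> Mset bl"
    and J_lin: "linear J" and J_sq: "\<forall>x. J (J x) = - x"
    and J_omega: "\<forall>x y. omega bl (J x) (J y) = omega bl x y"
    and g_pos: "\<forall>x. x \<noteq> 0 \<longrightarrow> gform bl J x x > 0"
begin

abbreviation "M \<equiv> Mset bl"
abbreviation "N \<equiv> Nset bl"
abbreviation "\<omega> \<equiv> omega bl"
abbreviation "g \<equiv> gform bl J"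

lemma lin1: "linear (\<lambda>x. bl x y)" using bil unfolding bilinear_def by auto
lemma lin2: "linear (\<lambda>y. bl x y)" using bil unfolding bilinear_def by auto

lemma bl_add1: "bl (x + x') y = bl x y + bl x' y" using linear_add[OF lin1] by blast
lemma bl_add2: "bl x (y + y') = bl x y + bl x y'" using linear_add[OF lin2] by blast
lemma bl_scale1: "bl (c *\<^sub>R x) y = c * bl x y" using linear_scale[OF lin1] by force
lemma bl_scale2: "bl x (c *\<^sub>R y) = c * bl x y" using linear_scale[OF lin2] by force
lemma bl_neg1: "bl (- x) y = - bl x y" using linear_neg[OF lin1] by force
lemma bl_neg2: "bl x (- y) = - bl x y" using linear_neg[OF lin2] by force
lemma bl_diff1: "bl (x - x') y = bl x y - bl x' y" using linear_diff[OF lin1] by force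
lemma bl_diff2: "bl x (y - y') = bl x y - bl x y'" using linear_diff[OF lin2] by force
lemma bl_zero1: "bl 0 y = 0" using linear_0[OF lin1] by force
lemma bl_zero2: "bl x 0 = 0" using linear_0[OF lin2] by force

lemmas bl_simps = bl_add1 bl_add2 bl_scale1 bl_scale2 bl_neg1 bl_neg2 bl_diff1 bl_diff2 bl_zero1 bl_zero2

lemma J_add: "J (x + y) = J x + J y" using linear_add[OF J_lin] by blast
lemma J_scale: "J (c *\<^sub>R x) = c *\<^sub>R J x" using linear_scale[OF J_lin] by blast
lemma J_neg: "J (- x) = - J x" using linear_neg[OF J_lin] by blast
lemma J_diff: "J (x - y) = J x - J y" using linear_diff[OF J_lin] by blast
lemma J_zero: "J 0 = 0" using linear_0[OF J_lin] by blast
lemma JJ: "J (J x) = - x" using J_sq by blast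
lemmas J_simps = J_add J_scale J_neg J_diff J_zero JJ

lemma q_add: "q (x + y) = q x + q y" using linear_add[OF q_lin] by blast
lemma q_diff: "q (x - y) = q x - q y" using linear_diff[OF q_lin] by blast
lemma q_zero: "q 0 = 0" using linear_0[OF q_lin] by blast

lemma om_anti: "\<omega> x y = - \<omega> y x" by (simp add: omega_def)
lemma om_JJ: "\<omega> (J x) (J y) = \<omega> x y" using J_omega by blast

lemma M_add: "x \<in> M \<Longrightarrow> y \<in> M \<Longrightarrow> x + y \<in> M" by (simp add: Mset_def bl_simps)
lemma M_diff: "x \<in> M \<Longrightarrow> y \<in> M \<Longrightarrow> x - y \<in> M" by (simp add: Mset_def bl_simps)
lemma M_scale: "x \<in> M \<Longrightarrow> c *\<^sub>R x \<in> M" by (simp add: Mset_def bl_simps)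
lemma M_neg: "x \<in> M \<Longrightarrow> - x \<in> M" by (simp add: Mset_def bl_simps)
lemma M_zero: "0 \<in> M" by (simp add: Mset_def bl_simps)
lemma N_add: "x \<in> N \<Longrightarrow> y \<in> N \<Longrightarrow> x + y \<in> N" by (simp add: Nset_def bl_simps)
lemma N_diff: "x \<in> N \<Longrightarrow> y \<in> N \<Longrightarrow> x - y \<in> N" by (simp add: Nset_def bl_simps)
lemma N_scale: "x \<in> N \<Longrightarrow> c *\<^sub>R x \<in> N" by (simp add: Nset_def bl_simps)

lemma iso_M: "x \<in> M \<Longrightarrow> y \<in> M \<Longrightarrow> \<omega> x y = 0" by (simp add: Mset_def omega_def)
lemma iso_N: "x \<in> N \<Longrightarrow> y \<in> N \<Longrightarrow> \<omega> x y = 0" by (simp add: Nset_def omega_def)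

lemma g_def': "g x y = 2 * \<omega> x (J y)" by (simp add: gform_def)

lemma g_zero: "g x x = 0 \<Longrightarrow> x = 0" using g_pos by force

lemma MJM: "m' \<in> M \<Longrightarrow> J m' \<in> M \<Longrightarrow> m' = 0"
proof -
  assume "m' \<in> M" "J m' \<in> M"
  then have "g m' m' = 0" by (simp add: g_def' iso_M)
  then show ?thesis by (rule g_zero)
qed

definition pM :: "'l \<Rightarrow> 'l" where "pM x = (SOME m. m \<in> M \<and> x - m \<in> N)"

lemma pM: "pM x \<in> M" "x - pM x \<in> N"
proof -
  obtain m n where "m \<in> M" "n \<in> N" "x = m + n" using dsum_span by blast
  then have "\<exists>m. m \<in> M \<and> x - m \<in> N" by (intro exI[of _ m]) auto
  then show "pM x \<in> M" "x - pM x \<in> N" unfolding pM_def by (metis (mono_tags, lifting) someI_ex)+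
qed

lemma pM_unique: "m \<in> M \<Longrightarrow> x - m \<in> N \<Longrightarrow> pM x = m"
proof -
  assume m: "m \<in> M" "x - m \<in> N"
  have "pM x - m \<in> M" using pM m M_diff by blast
  moreover have "pM x - m = (x - m) - (x - pM x)" by simp
  then have "pM x - m \<in> N" using pM m N_diff by metis
  ultimately have "pM x - m = 0" using dsum_int by blast
  then show ?thesis by simp
qed

lemma pM_lin: "linear pM"
proof (rule linearI)
  fix x y
  show "pM (x + y) = pM x + pM y"
  proof (rule pM_unique)
    show "pM x + pM y \<in> M" using pM M_add by blast
    have "x + y - (pM x + pM y) = (x - pM x) + (y - pM y)" by simp
    then show "x + y - (pM x + pM y) \<in> N" using pM N_add by metis
  qed
next
  fix c x
  show "pM (c *\<^sub>R x) = c *\<^sub>R pM x"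
  proof (rule pM_unique)
    show "c *\<^sub>R pM x \<in> M" using pM M_scale by blast
    have "c *\<^sub>R x - c *\<^sub>R pM x = c *\<^sub>R (x - pM x)" by (simp add: algebra_simps)
    then show "c *\<^sub>R x - c *\<^sub>R pM x \<in> N" using pM N_scale by metis
  qed
qed

definition Sm :: "'l \<Rightarrow> 'l" where "Sm x = pM x + J (pM (J x))"

lemma Sm_lin: "linear Sm"
  unfolding Sm_def by (intro linear_compose_add linear_compose[unfolded o_def, OF J_lin] linear_compose[unfolded o_def, OF _ J_lin] linear_compose[unfolded o_def, OF _ pM_lin] pM_lin J_lin)

lemma Sm_inj: "inj Sm"
proof -
  have "x = 0" if "Sm x = 0" for x
  proof -
    have e: "pM x = J (- pM (J x))" using that by (simp add: Sm_def J_simps eq_neg_iff_add_eq_0)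
    have "- pM (J x) \<in> M" using pM M_neg by blast
    moreover have "J (- pM (J x)) \<in> M" using e pM by metis
    ultimately have "- pM (J x) = 0" by (rule MJM)
    then have p1: "pM (J x) = 0" by simp
    then have p2: "pM x = 0" using e by (simp add: J_simps)
    have xN: "x \<in> N" using pM(2)[of x] p2 by simp
    have JxN: "J x \<in> N" using pM(2)[of "J x"] p1 by simp
    have "g x x = 0" using iso_N[OF xN JxN] by (simp add: g_def')
    then show ?thesis by (rule g_zero)
  qed
  then show ?thesis using linear_injective_0[OF Sm_lin] by blast
qed

lemma Sm_surj: "surj Sm" by (rule linear_inj_imp_surj[OF Sm_lin Sm_inj])

end




context LA begin

lemma JM_diff: "a \<in> J ` M \<Longrightarrow> b \<in> J ` M \<Longrightarrow> a - b \<in> J ` M"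
proof -
  assume "a \<in> J ` M" "b \<in> J ` M"
  then obtain a' b' where "a' \<in> M" "b' \<in> M" "a = J a'" "b = J b'" by blast
  then show ?thesis by (metis J_diff M_diff image_eqI)
qed

lemma M_JM_zero: "x \<in> M \<Longrightarrow> x \<in> J ` M \<Longrightarrow> x = 0"
proof -
  assume "x \<in> M" "x \<in> J ` M"
  then obtain m where "m \<in> M" "x = J m" by blast
  then have "m = 0" using MJM \<open>x \<in> M\<close> by blast
  then show ?thesis using \<open>x = J m\<close> J_zero by simp
qed

lemma j_exists: "\<exists>j. linear j \<and> (\<forall>\<phi>. q (j \<phi>) = \<phi>) \<and> range j \<subseteq> J ` M"
proof -
  obtain s where s: "linear s" "q \<circ> s = id" using linear_surjective_right_inverse[OF q_lin q_surj] by blast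
  obtain Si where Si: "linear Si" "Si \<circ> Sm = id" using linear_injective_left_inverse[OF Sm_lin Sm_inj] by blast
  have SSi: "Sm (Si y) = y" for y
  proof -
    obtain x where "y = Sm x" using Sm_surj by (metis surjD)
    then show ?thesis using Si(2) by (metis comp_apply id_apply)
  qed
  define j where "j \<phi> = J (pM (J (Si (s \<phi>))))" for \<phi>
  have "linear j"
    unfolding j_def
    by (intro linear_compose[unfolded o_def, OF _ J_lin] linear_compose[unfolded o_def, OF _ pM_lin]
        linear_compose[unfolded o_def, OF _ Si(1)] s(1))
  moreover have "q (j \<phi>) = \<phi>" for \<phi>
  proof -
    have "s \<phi> = pM (Si (s \<phi>)) + j \<phi>" using SSi[of "s \<phi>"] by (simp add: Sm_def j_def)
    then have "q (s \<phi>) = q (pM (Si (s \<phi>))) + q (j \<phi>)" by (metis q_add)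
    moreover have "q (pM (Si (s \<phi>))) = 0" using pM q_ker by blast
    moreover have "q (s \<phi>) = \<phi>" using s(2) by (metis comp_apply id_apply)
    ultimately show ?thesis by simp
  qed
  moreover have "range j \<subseteq> J ` M" unfolding j_def using pM by blast
  ultimately show ?thesis by blast
qed

definition jj :: "'q \<Rightarrow> 'l" where "jj = jmap bl J q"

lemma jj_props: "linear jj" "\<And>\<phi>. q (jj \<phi>) = \<phi>" "\<And>\<phi>. jj \<phi> \<in> J ` M"
proof -
  obtain j where j: "linear j" "\<forall>\<phi>. q (j \<phi>) = \<phi>" "range j \<subseteq> J ` M" using j_exists by blast
  have "jmap bl J q = j"
    unfolding jmap_def
  proof (rule the_equality)
    show "linear j \<and> (\<forall>\<phi>. q (j \<phi>) = \<phi>) \<and> range j \<subseteq> J ` M" using j by blast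
  next
    fix j' assume j': "linear j' \<and> (\<forall>\<phi>. q (j' \<phi>) = \<phi>) \<and> range j' \<subseteq> J ` M"
    show "j' = j"
    proof
      fix \<phi>
      have "j' \<phi> - j \<phi> \<in> J ` M" using j j' JM_diff by blast
      moreover have "q (j' \<phi> - j \<phi>) = 0" using j j' by (simp add: q_diff)
      then have "j' \<phi> - j \<phi> \<in> M" using q_ker by blast
      ultimately show "j' \<phi> = j \<phi>" using M_JM_zero by force
    qed
  qed
  then show "linear jj" "\<And>\<phi>. q (jj \<phi>) = \<phi>" "\<And>\<phi>. jj \<phi> \<in> J ` M" using j by (auto simp: jj_def)
qed

lemma jj_add: "jj (x + y) = jj x + jj y" using linear_add[OF jj_props(1)] by blast
lemma jj_scale: "jj (c *\<^sub>R x) = c *\<^sub>R jj x" using linear_scale[OF jj_props(1)] by blast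
lemma jj_zero: "jj 0 = 0" using linear_0[OF jj_props(1)] by blast

lemma g_lin1: "linear (\<lambda>x. g x y)"
  by (rule linearI) (auto simp: gform_def omega_def bl_simps field_simps)

lemma g_lin2: "linear (\<lambda>y. g x y)"
  by (rule linearI) (auto simp: gform_def omega_def bl_simps J_simps field_simps)

end



context LA begin

lemma jj_expand: "jj \<phi> = (\<Sum>b\<in>Basis. (\<phi> \<bullet> b) *\<^sub>R jj b)"
proof -
  have "jj \<phi> = jj (\<Sum>b\<in>Basis. (\<phi> \<bullet> b) *\<^sub>R b)" by (simp add: euclidean_representation)
  also have "\<dots> = (\<Sum>b\<in>Basis. (\<phi> \<bullet> b) *\<^sub>R jj b)"
    by (simp add: linear_sum[OF jj_props(1)] linear_scale[OF jj_props(1)])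
  finally show ?thesis .
qed

lemma g_jj_expand: "g (jj \<phi>) y = (\<Sum>b\<in>Basis. (\<phi> \<bullet> b) * g (jj b) y)"
  by (subst jj_expand) (simp add: linear_sum[OF g_lin1] linear_scale[OF g_lin1])

definition H :: "'q \<Rightarrow> 'q" where "H \<psi> = (\<Sum>b\<in>Basis. g (jj b) (jj \<psi>) *\<^sub>R b)"

lemma H_inner: "\<phi> \<bullet> H \<psi> = g (jj \<phi>) (jj \<psi>)"
proof -
  have "\<phi> \<bullet> H \<psi> = (\<Sum>b\<in>Basis. (\<phi> \<bullet> b) * g (jj b) (jj \<psi>))"
    by (simp add: H_def inner_sum_right mult.commute)
  then show ?thesis by (simp only: g_jj_expand[of \<phi>])
qed

lemma H_lin: "linear H"
proof (rule linearI)
  fix x y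
  show "H (x + y) = H x + H y"
    by (simp add: H_def jj_add linear_add[OF g_lin2] scaleR_add_left sum.distrib)
next
  fix c x
  show "H (c *\<^sub>R x) = c *\<^sub>R H x"
    by (simp add: H_def jj_scale linear_scale[OF g_lin2] scaleR_sum_right)
qed

lemma H_inj: "inj H"
proof -
  have "\<psi> = 0" if "H \<psi> = 0" for \<psi>
  proof -
    have "g (jj \<psi>) (jj \<psi>) = 0" using H_inner[of \<psi> \<psi>] that by simp
    then have "jj \<psi> = 0" by (rule g_zero)
    then show ?thesis using jj_props(2)[of \<psi>] q_zero by simp
  qed
  then show ?thesis using linear_injective_0[OF H_lin] by blast
qed

lemma rep: "\<exists>\<psi>. \<forall>\<phi>. g (jj \<phi>) (jj \<psi>) = \<phi> \<bullet> v"
proof -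
  obtain \<psi> where "H \<psi> = v" using linear_inj_imp_surj[OF H_lin H_inj] by (metis surjD)
  then show ?thesis using H_inner by metis
qed

definition E :: "'q \<Rightarrow> complex" where
  "E \<phi> = exp (\<i> / 2 * of_real (bl (jj \<phi>) (jj \<phi>)) - of_real (g (jj \<phi>) (jj \<phi>) / 2))"

lemma Bfun_eq:
  assumes \<tau>: "\<tau> = - J (jj \<psi>)"
  shows "cnj (Bfun bl J q \<tau> \<phi>) = exp (of_real (g \<tau> \<tau> / 4)) * (exp (\<i> * of_real (g (jj \<phi>) (jj \<psi>))) * E \<phi>)"
proof -
  obtain a where a: "a \<in> M" "jj \<phi> = J a" using jj_props(3)[of \<phi>] by blast
  obtain b where b: "b \<in> M" "jj \<psi> = J b" using jj_props(3)[of \<psi>] by blast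
  have \<tau>b: "\<tau> = b" using \<tau> b by (simp add: JJ)
  have q\<tau>: "jj (q \<tau>) = 0" using \<tau>b b q_ker jj_zero by metis
  have c0: "cbr bl J 0 \<tau> = 0" by (simp add: cbr_def gform_def omega_def bl_simps)
  have g1: "g (jj \<phi>) \<tau> = 0" using a b \<tau>b by (simp add: g_def' om_JJ iso_M)
  have g2: "g (jj \<phi>) (jj \<psi>) = - 2 * \<omega> (jj \<phi>) \<tau>"
    using a b \<tau>b by (simp add: g_def' JJ omega_def bl_simps)
  have cb: "cbr bl J (jj \<phi>) \<tau> = - \<i> * of_real (g (jj \<phi>) (jj \<psi>))"
    unfolding cbr_def g1 g2 by simp
  have Bf: "Bfun bl J q \<tau> \<phi> = exp (- \<i> * of_real (g (jj \<phi>) (jj \<psi>)) - (\<i> / 2) * of_real (bl (jj \<phi>) (jj \<phi>))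
       - of_real (g (jj \<phi>) (jj \<phi>) / 2) + of_real (g \<tau> \<tau> / 4))"
    unfolding Bfun_def Let_def jj_def[symmetric] q\<tau> c0 cb by simp
  have "cnj (Bfun bl J q \<tau> \<phi>) = exp (of_real (g \<tau> \<tau> / 4) + (\<i> * of_real (g (jj \<phi>) (jj \<psi>)) +
      (\<i> / 2 * of_real (bl (jj \<phi>) (jj \<phi>)) - of_real (g (jj \<phi>) (jj \<phi>) / 2))))"
    unfolding Bf exp_cnj by (rule arg_cong[where f=exp]) (simp add: complex_eq_iff)
  then show ?thesis by (simp only: exp_add E_def)
qed

lemma E_norm2: "(norm (E \<phi>))^2 = exp (- g (jj \<phi>) (jj \<phi>))"
proof -
  have "norm (E \<phi>) = exp (- g (jj \<phi>) (jj \<phi>) / 2)" by (simp add: E_def)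
  then show ?thesis by (simp add: power2_eq_square exp_add[symmetric])
qed

lemma E_nz: "E \<phi> \<noteq> 0" by (simp add: E_def)

lemma bl_cont: "continuous_on UNIV (\<lambda>x. bl (f x) (h x))" if "continuous_on UNIV f" "continuous_on UNIV h"
  using bounded_bilinear.continuous_on[OF bil[unfolded bilinear_conv_bounded_bilinear] that] by simp

lemma jj_cont: "continuous_on UNIV jj"
  using linear_continuous_on[OF jj_props(1)[unfolded linear_conv_bounded_linear]] .

lemma E_cont: "continuous_on UNIV E"
proof -
  have J_cont: "continuous_on UNIV J" using linear_continuous_on[OF J_lin[unfolded linear_conv_bounded_linear]] .
  have c1: "continuous_on UNIV (\<lambda>\<phi>. bl (jj \<phi>) (jj \<phi>))" by (intro bl_cont jj_cont)
  have c2: "continuous_on UNIV (\<lambda>\<phi>. g (jj \<phi>) (jj \<phi>))"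
    unfolding gform_def omega_def
    by (intro continuous_intros bl_cont jj_cont continuous_on_compose2[OF J_cont jj_cont]) simp_all
  show ?thesis unfolding E_def by (intro continuous_intros c1 c2) auto
qed

end



context LA begin

lemma trig_to_B:
  assumes "trigp P"
  shows "\<exists>T c. finite T \<and> (\<forall>\<phi>. (\<Sum>\<tau>\<in>T. c \<tau> * cnj (Bfun bl J q \<tau> \<phi>)) = P \<phi> * E \<phi>)"
proof -
  obtain V cv where V: "finite V" "\<And>x. P x = (\<Sum>v\<in>V. cv v * exp (\<i> * of_real (x \<bullet> v)))"
    using assms unfolding trigp_def by blast
  define \<psi> where "\<psi> v = (SOME \<psi>. \<forall>\<phi>. g (jj \<phi>) (jj \<psi>) = \<phi> \<bullet> v)" for v
  have \<psi>: "g (jj \<phi>) (jj (\<psi> v)) = \<phi> \<bullet> v" for \<phi> v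
    using someI_ex[OF rep[of v]] unfolding \<psi>_def by blast
  define tf where "tf v = - J (jj (\<psi> v))" for v
  have inj: "inj_on tf V"
  proof (rule inj_onI)
    fix v w assume "tf v = tf w"
    then have "J (J (jj (\<psi> v))) = J (J (jj (\<psi> w)))" by (simp add: tf_def)
    then have "jj (\<psi> v) = jj (\<psi> w)" by (simp add: JJ)
    then have "\<phi> \<bullet> v = \<phi> \<bullet> w" for \<phi> using \<psi>[of \<phi> v] \<psi>[of \<phi> w] by simp
    then have "(v - w) \<bullet> (v - w) = 0" by (simp add: inner_diff_right)
    then show "v = w" by simp
  qed
  define c where "c \<tau> = cv (inv_into V tf \<tau>) / exp (of_real (g \<tau> \<tau> / 4))" for \<tau>
  have "(\<Sum>\<tau>\<in>tf ` V. c \<tau> * cnj (Bfun bl J q \<tau> \<phi>)) = P \<phi> * E \<phi>" for \<phi>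
  proof -
    have "(\<Sum>\<tau>\<in>tf ` V. c \<tau> * cnj (Bfun bl J q \<tau> \<phi>)) = (\<Sum>v\<in>V. c (tf v) * cnj (Bfun bl J q (tf v) \<phi>))"
      by (rule sum.reindex[OF inj, unfolded o_def])
    also have "\<dots> = (\<Sum>v\<in>V. cv v * exp (\<i> * of_real (\<phi> \<bullet> v)) * E \<phi>)"
    proof (rule sum.cong[OF refl])
      fix v assume v: "v \<in> V"
      have "cnj (Bfun bl J q (tf v) \<phi>) = exp (of_real (g (tf v) (tf v) / 4)) * (exp (\<i> * of_real (\<phi> \<bullet> v)) * E \<phi>)"
        using Bfun_eq[of "tf v" "\<psi> v" \<phi>] \<psi>[of \<phi> v] by (simp add: tf_def)
      moreover have "inv_into V tf (tf v) = v" using inj v by simp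
      ultimately show "c (tf v) * cnj (Bfun bl J q (tf v) \<phi>) = cv v * exp (\<i> * of_real (\<phi> \<bullet> v)) * E \<phi>"
        by (simp add: c_def)
    qed
    also have "\<dots> = P \<phi> * E \<phi>" by (simp add: V(2) sum_distrib_right)
    finally show ?thesis .
  qed
  then show ?thesis using V(1) by blast
qed

end

theorem proposition3p2:
  fixes bl :: "'l::euclidean_space \<Rightarrow> 'l \<Rightarrow> real"
    and J :: "'l \<Rightarrow> 'l"
    and q :: "'l \<Rightarrow> 'q::euclidean_space"
  assumes bil: "bilinear bl"
    and nondeg: "\<forall>x. (\<forall>y. omega bl x y = 0) \<longrightarrow> x = 0"
    and dsum_int: "Mset bl \<inter> Nset bl = {0}"
    and dsum_span: "\<forall>x. \<exists>m\<in>Mset bl. \<exists>n\<in>Nset bl. x = m + n"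
    and q_lin: "linear q" and q_surj: "surj q"
    and q_ker: "\<forall>x. q x = 0 \<longleftrightarrow> x \<in> Mset bl"
    and J_lin: "linear J" and J_sq: "\<forall>x. J (J x) = - x"
    and J_omega: "\<forall>x y. omega bl (J x) (J y) = omega bl x y"
    and g_pos: "\<forall>x. x \<noteq> 0 \<longrightarrow> gform bl J x x > 0"
    and f_meas: "f \<in> borel_measurable (muQ bl J q)"
    and f_L2: "(\<integral>\<^sup>+ \<phi>. ennreal (norm (f \<phi> :: complex))^2 \<partial>(muQ bl J q)) < \<infinity>"
    and eps: "\<epsilon> > 0"
  shows "\<exists>T c. finite T \<and>
    (\<integral>\<^sup>+ \<phi>. ennreal (norm (f \<phi> - (\<Sum>\<tau>\<in>T. c \<tau> * cnj (Bfun bl J q \<tau> \<phi>))))^2 \<partial>(muQ bl J q))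
      < ennreal \<epsilon>"
proof -
  interpret LA bl J q
    by (rule LA.intro[OF bil nondeg dsum_int dsum_span q_lin q_surj q_ker J_lin J_sq J_omega g_pos])
  define Z where "Z = (\<integral>\<^sup>+ \<psi>. ennreal (exp (- gform bl J (jj \<psi>) (jj \<psi>))) \<partial>(lborel::'q measure))"
  define C where "C = inverse Z"
  have mu: "muQ bl J q = density lborel (\<lambda>_. C)"
    unfolding muQ_def C_def Z_def jj_def by simp
  have fm[measurable]: "f \<in> borel_measurable lborel" using f_meas by (simp add: mu)
  have int: "(\<integral>\<^sup>+x. h x \<partial>muQ bl J q) = C * (\<integral>\<^sup>+x. h x \<partial>lborel)" if "h \<in> borel_measurable lborel" for h
    unfolding mu using that by (simp add: nn_integral_density nn_integral_cmult)
  have fmm: "(\<lambda>x. ennreal (norm (f x))^2) \<in> borel_measurable lborel" by measurable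
  have If: "C * (\<integral>\<^sup>+x. ennreal (norm (f x))^2 \<partial>lborel) < \<infinity>"
    using f_L2 int[OF fmm] by simp
  consider "C = 0" | "C = top" | c where "c > 0" "C = ennreal c"
  proof (cases C rule: ennreal_cases)
    case (real r)
    then show ?thesis using that by (cases "r = 0") auto
  qed auto
  then show ?thesis
  proof cases
    case 1
    have "(\<integral>\<^sup>+ \<phi>. ennreal (norm (f \<phi> - (\<Sum>\<tau>\<in>{}. (\<lambda>_. 0) \<tau> * cnj (Bfun bl J q \<tau> \<phi>))))^2 \<partial>(muQ bl J q)) = 0"
      using int[OF fmm] 1 by simp
    then show ?thesis using eps by (intro exI[of _ "{}"] exI[of _ "\<lambda>_. 0"]) simp
  next
    case 2
    then have "(\<integral>\<^sup>+x. ennreal (norm (f x))^2 \<partial>lborel) = 0"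
      using If by (cases "(\<integral>\<^sup>+x. ennreal (norm (f x))^2 \<partial>lborel) = 0") (auto simp: ennreal_top_mult)
    then have "(\<integral>\<^sup>+ \<phi>. ennreal (norm (f \<phi> - (\<Sum>\<tau>\<in>{}. (\<lambda>_. 0) \<tau> * cnj (Bfun bl J q \<tau> \<phi>))))^2 \<partial>(muQ bl J q)) = 0"
      using int[OF fmm] by simp
    then show ?thesis using eps by (intro exI[of _ "{}"] exI[of _ "\<lambda>_. 0"]) simp
  next
    case 3
    have fL2: "(\<integral>\<^sup>+x. ennreal (norm (f x))^2 \<partial>lborel) < \<infinity>"
      using If 3 by (cases "(\<integral>\<^sup>+x. ennreal (norm (f x))^2 \<partial>lborel) = top") (auto simp: ennreal_mult_top top.not_eq_extremum)
    have "Z \<noteq> \<infinity>" using 3 unfolding C_def by (auto simp: infinity_ennreal_def)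
    have E2: "ennreal (norm (E \<psi>))^2 = ennreal (exp (- gform bl J (jj \<psi>) (jj \<psi>)))" for \<psi>
      using E_norm2[of \<psi>] by (simp add: ennreal_power)
    have wL2: "(\<integral>\<^sup>+x. ennreal (norm (E x))^2 \<partial>lborel) < \<infinity>"
      using \<open>Z \<noteq> \<infinity>\<close> by (simp add: E2 Z_def top.not_eq_extremum)
    have e': "\<epsilon> / c > 0" using eps 3 by simp
    obtain P where tP: "trigp P" and Pi: "(\<integral>\<^sup>+x. ennreal (norm (f x - P x * E x))^2 \<partial>lborel) < ennreal (\<epsilon> / c)"
      using main_dense[OF fm fL2 E_cont _ wL2 e'] E_nz by blast
    obtain T cc where T: "finite T" "\<And>\<phi>. (\<Sum>\<tau>\<in>T. cc \<tau> * cnj (Bfun bl J q \<tau> \<phi>)) = P \<phi> * E \<phi>"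
      using trig_to_B[OF tP] by blast
    have Pm: "(\<lambda>x. ennreal (norm (f x - P x * E x))^2) \<in> borel_measurable lborel"
    proof -
      have "continuous_on UNIV (\<lambda>x. P x * E x)" using trigp_cont[OF tP] E_cont by (intro continuous_intros)
      then have [measurable]: "(\<lambda>x. P x * E x) \<in> borel_measurable lborel" by (simp add: borel_measurable_continuous_onI)
      show ?thesis by measurable
    qed
    have "(\<integral>\<^sup>+ \<phi>. ennreal (norm (f \<phi> - (\<Sum>\<tau>\<in>T. cc \<tau> * cnj (Bfun bl J q \<tau> \<phi>))))^2 \<partial>(muQ bl J q))
        = ennreal c * (\<integral>\<^sup>+x. ennreal (norm (f x - P x * E x))^2 \<partial>lborel)"
      using int[OF Pm] 3 by (simp add: T(2))
    also have "\<dots> < ennreal c * ennreal (\<epsilon> / c)"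
      using Pi 3 by (simp add: ennreal_mult_strict_left_mono)
    also have "\<dots> = ennreal (c * (\<epsilon> / c))" using 3 eps by (intro ennreal_mult[symmetric]) auto
    also have "\<dots> = ennreal \<epsilon>" using 3 by simp
    finally show ?thesis using T(1) by blast
  qed
qed


end
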